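(* Assume the Setup (for a single $n$) and the Spectral notation, and let $\epsilon,\delta>0$ be arbitrary. Then \[|U_{\epsilon,\delta}|\le \frac{m\,k(k+1)}{d^2\epsilon\delta}.\]
   Context: Setup. $k\ge 1$ is an integer and $d$ a positive integer. $G=(V,U,E)$ is a finite simple bipartite graph with parts $V$, $|V|=n$, and $U$, $|U|=m$, which is $C_4$-free (any two distinct vertices have at most one common neighbour) and $(d,k+1)$-bi-regular (every $v\in V$ has degree $d$ and every $u\in U$ has degree $k+1$). $B$ is a signed adjacency matrix of $G$: the real $V\times U$ matrix with $B_{v,u}\in\{1,-1\}$ if $vu\in E$ and $B_{v,u}=0$ otherwise. Spectral notation. $L^-=\frac1d B^TB$ (a $U\times U$ positive semidefinite matrix); $\lambda_1,\dots,\lambda_{\operatorname{rank}B}$ are its positive eigenvalues (with multiplicity) and $\psi_1,\dots,\psi_{\operatorname{rank}B}\in\mathbb R^U$ a corresponding orthonormal family of eigenvectors. A vertex $u\in U$ is $(\epsilon,\delta)$-structured if $\sum_{i:(\lambda_i-1)^2>\epsilon}\psi_i(u)^2>\delta$, and $U_{\epsilon,\delta}$ is the set of such vertices. *)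

theory Defs
  imports "Jordan_Normal_Form.Matrix" "Jordan_Normal_Form.DL_Rank"
begin

definition C4free_bireg :: "nat \<Rightarrow> nat \<Rightarrow> (nat \<times> nat) set \<Rightarrow> nat \<Rightarrow> nat \<Rightarrow> bool" where
  "C4free_bireg n m E d k \<longleftrightarrow>
     E \<subseteq> {0..<n} \<times> {0..<m}
   \<and> (\<forall>v<n. card {u. u < m \<and> (v,u) \<in> E} = d)
   \<and> (\<forall>u<m. card {v. v < n \<and> (v,u) \<in> E} = k + 1)
   \<and> (\<forall>v<n. \<forall>v'<n. v \<noteq> v' \<longrightarrow> card {u. u < m \<and> (v,u) \<in> E \<and> (v',u) \<in> E} \<le> 1)
   \<and> (\<forall>u<m. \<forall>u'<m. u \<noteq> u' \<longrightarrow> card {v. v < n \<and> (v,u) \<in> E \<and> (v,u') \<in> E} \<le> 1)"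

definition signed_adj :: "nat \<Rightarrow> nat \<Rightarrow> (nat \<times> nat) set \<Rightarrow> real mat \<Rightarrow> bool" where
  "signed_adj n m E B \<longleftrightarrow> B \<in> carrier_mat n m
   \<and> (\<forall>v<n. \<forall>u<m. (if (v,u) \<in> E then B $$ (v,u) \<in> {1, -1} else B $$ (v,u) = 0))"

definition Lminus :: "nat \<Rightarrow> real mat \<Rightarrow> real mat" where
  "Lminus d B = (1 / real d) \<cdot>\<^sub>m (transpose_mat B * B)"

text \<open>\<open>lam\<close>, \<open>psi\<close> (indices 0..<r, r = rank B): positive eigenvalues of L^- with multiplicity
  and an orthonormal family of corresponding eigenvectors.\<close>
definition pos_eigen_system :: "nat \<Rightarrow> nat \<Rightarrow> real mat \<Rightarrow> nat \<Rightarrow> (nat \<Rightarrow> real) \<Rightarrow> (nat \<Rightarrow> real vec) \<Rightarrow> bool" where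
  "pos_eigen_system m d B r lam psi \<longleftrightarrow>
     (\<forall>i<r. psi i \<in> carrier_vec m \<and> lam i > 0 \<and> Lminus d B *\<^sub>v psi i = lam i \<cdot>\<^sub>v psi i)
   \<and> (\<forall>i<r. \<forall>j<r. psi i \<bullet> psi j = (if i = j then 1 else 0))"

definition structured_set :: "nat \<Rightarrow> nat \<Rightarrow> (nat \<Rightarrow> real) \<Rightarrow> (nat \<Rightarrow> real vec) \<Rightarrow> real \<Rightarrow> real \<Rightarrow> nat set" where
  "structured_set m r lam psi \<epsilon> \<delta> =
     {u. u < m \<and> (\<Sum>i\<in>{i. i < r \<and> (lam i - 1)^2 > \<epsilon>}. (psi i $ u)^2) > \<delta>}"

end

theory Submission
  imports Defs
begin

lemma bessel:
  fixes f :: "'a \<Rightarrow> real" and \<phi> :: "'b \<Rightarrow> 'a \<Rightarrow> real"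
  assumes "finite I" "finite X"
    and orth: "\<And>i j. i\<in>I \<Longrightarrow> j\<in>I \<Longrightarrow> (\<Sum>x\<in>X. \<phi> i x * \<phi> j x) = (if i = j then 1 else 0)"
  shows "(\<Sum>i\<in>I. (\<Sum>x\<in>X. f x * \<phi> i x)^2) \<le> (\<Sum>x\<in>X. (f x)^2)"
proof -
  define c where "c i = (\<Sum>x\<in>X. f x * \<phi> i x)" for i
  define s where "s x = (\<Sum>i\<in>I. c i * \<phi> i x)" for x
  have "(\<Sum>x\<in>X. f x * s x) = (\<Sum>x\<in>X. \<Sum>i\<in>I. c i * (f x * \<phi> i x))"
    unfolding s_def by (simp add: sum_distrib_left mult_ac)
  also have "\<dots> = (\<Sum>i\<in>I. \<Sum>x\<in>X. c i * (f x * \<phi> i x))" by (rule sum.swap)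
  also have "\<dots> = (\<Sum>i\<in>I. c i ^ 2)" unfolding c_def power2_eq_square
    by (simp add: sum_distrib_left)
  finally have 1: "(\<Sum>x\<in>X. f x * s x) = (\<Sum>i\<in>I. c i ^ 2)" .
  have "(\<Sum>x\<in>X. s x * s x) = (\<Sum>x\<in>X. \<Sum>i\<in>I. \<Sum>j\<in>I. c i * c j * (\<phi> i x * \<phi> j x))"
    unfolding s_def by (simp add: sum_product mult_ac)
  also have "\<dots> = (\<Sum>i\<in>I. \<Sum>x\<in>X. \<Sum>j\<in>I. c i * c j * (\<phi> i x * \<phi> j x))" by (rule sum.swap)
  also have "\<dots> = (\<Sum>i\<in>I. \<Sum>j\<in>I. \<Sum>x\<in>X. c i * c j * (\<phi> i x * \<phi> j x))"
    by (rule sum.cong, simp, rule sum.swap)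
  also have "\<dots> = (\<Sum>i\<in>I. \<Sum>j\<in>I. c i * c j * (\<Sum>x\<in>X. \<phi> i x * \<phi> j x))"
    by (simp add: sum_distrib_left)
  finally have 2: "(\<Sum>x\<in>X. s x * s x) = (\<Sum>i\<in>I. \<Sum>j\<in>I. c i * c j * (\<Sum>x\<in>X. \<phi> i x * \<phi> j x))" .
  have 3: "(\<Sum>i\<in>I. \<Sum>j\<in>I. c i * c j * (\<Sum>x\<in>X. \<phi> i x * \<phi> j x)) = (\<Sum>i\<in>I. c i ^ 2)"
  proof (rule sum.cong, simp)
    fix i assume i: "i \<in> I"
    have "(\<Sum>j\<in>I. c i * c j * (\<Sum>x\<in>X. \<phi> i x * \<phi> j x)) = (\<Sum>j\<in>I. if j = i then c i * c i else 0)"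
      by (rule sum.cong) (auto simp: orth i)
    also have "\<dots> = c i ^ 2" using i assms(1) by (simp add: power2_eq_square)
    finally show "(\<Sum>j\<in>I. c i * c j * (\<Sum>x\<in>X. \<phi> i x * \<phi> j x)) = c i ^ 2" .
  qed
  have "0 \<le> (\<Sum>x\<in>X. (f x - s x)^2)" by (simp add: sum_nonneg)
  also have "\<dots> = (\<Sum>x\<in>X. (f x)^2) - 2 * (\<Sum>x\<in>X. f x * s x) + (\<Sum>x\<in>X. s x * s x)"
  proof -
    have "(\<Sum>x\<in>X. (f x - s x)^2) = (\<Sum>x\<in>X. ((f x)^2 - 2 * (f x * s x)) + s x * s x)"
      by (rule sum.cong) (auto simp: power2_eq_square algebra_simps)
    also have "\<dots> = (\<Sum>x\<in>X. (f x)^2) - 2 * (\<Sum>x\<in>X. f x * s x) + (\<Sum>x\<in>X. s x * s x)"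
      by (simp only: sum.distrib sum_subtractf sum_distrib_left)
    finally show ?thesis .
  qed
  finally show ?thesis using 1 2 3 unfolding c_def by simp
qed

lemma core:
  fixes b e p :: "nat \<Rightarrow> nat \<Rightarrow> real" and lam :: "nat \<Rightarrow> real" and D :: real
  assumes D: "D > 0" and fI: "finite I"
    and be: "\<And>v u. v < n \<Longrightarrow> u < m \<Longrightarrow> \<bar>b v u\<bar> = e v u \<and> (e v u = 0 \<or> e v u = 1)"
    and degv: "\<And>v. v < n \<Longrightarrow> (\<Sum>u=0..<m. e v u) = D"
    and degu: "\<And>u. u < m \<Longrightarrow> (\<Sum>v=0..<n. e v u) = real k + 1"
    and c4: "\<And>v v'. v < n \<Longrightarrow> v' < n \<Longrightarrow> v \<noteq> v' \<Longrightarrow> (\<Sum>u=0..<m. e v u * e v' u) \<le> 1"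
    and eig: "\<And>i u. i \<in> I \<Longrightarrow> u < m \<Longrightarrow>
       (\<Sum>u'=0..<m. (\<Sum>v=0..<n. b v u * b v u' / D) * p i u') = lam i * p i u"
    and lpos: "\<And>i. i \<in> I \<Longrightarrow> lam i > 0"
    and orth: "\<And>i j. i \<in> I \<Longrightarrow> j \<in> I \<Longrightarrow> (\<Sum>u=0..<m. p i u * p j u) = (if i = j then 1 else 0)"
  shows "(\<Sum>i\<in>I. (lam i - 1)^2) \<le> real m * real k * (real k + 1) / D^2"
proof -
  define w where "w i v = (\<Sum>u=0..<m. b v u * p i u)" for i v
  have eig': "(\<Sum>v=0..<n. b v u * w i v) = D * lam i * p i u" if i: "i \<in> I" and u: "u < m" for i u
  proof -
    have "(\<Sum>v=0..<n. b v u * w i v) = (\<Sum>v=0..<n. \<Sum>u'=0..<m. b v u * b v u' * p i u')"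
      unfolding w_def by (simp add: sum_distrib_left mult_ac)
    also have "\<dots> = (\<Sum>u'=0..<m. \<Sum>v=0..<n. b v u * b v u' * p i u')" by (rule sum.swap)
    also have "\<dots> = D * (\<Sum>u'=0..<m. (\<Sum>v=0..<n. b v u * b v u' / D) * p i u')"
      using D by (simp add: sum_distrib_left sum_distrib_right sum_divide_distrib)
    also have "\<dots> = D * lam i * p i u" using eig[OF i u] by simp
    finally show ?thesis .
  qed
  have ww: "(\<Sum>v=0..<n. w i v * w j v) = D * lam i * (if i = j then 1 else 0)"
    if i: "i \<in> I" and j: "j \<in> I" for i j
  proof -
    have "(\<Sum>v=0..<n. w i v * w j v) = (\<Sum>v=0..<n. \<Sum>u=0..<m. p j u * (b v u * w i v))"
      unfolding w_def[of j] by (simp add: sum_distrib_left sum_distrib_right mult_ac)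
    also have "\<dots> = (\<Sum>u=0..<m. \<Sum>v=0..<n. p j u * (b v u * w i v))" by (rule sum.swap)
    also have "\<dots> = (\<Sum>u=0..<m. p j u * (D * lam i * p i u))"
      by (rule sum.cong, simp, simp add: sum_distrib_left[symmetric] eig' i)
    also have "\<dots> = D * lam i * (\<Sum>u=0..<m. p i u * p j u)"
      by (simp add: sum_distrib_left mult_ac)
    finally show ?thesis using orth[OF i j] by simp
  qed
  define G where "G v v' = (\<Sum>u=0..<m. b v u * b v' u)" for v v'
  have Gw: "(\<Sum>v'=0..<n. G v v' * w i v') = D * lam i * w i v" if i: "i \<in> I" for i v
  proof -
    have "(\<Sum>v'=0..<n. G v v' * w i v') = (\<Sum>v'=0..<n. \<Sum>u=0..<m. b v u * (b v' u * w i v'))"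
      unfolding G_def by (simp add: sum_distrib_left sum_distrib_right mult_ac)
    also have "\<dots> = (\<Sum>u=0..<m. \<Sum>v'=0..<n. b v u * (b v' u * w i v'))" by (rule sum.swap)
    also have "\<dots> = (\<Sum>u=0..<m. b v u * (D * lam i * p i u))"
      by (rule sum.cong, simp, simp add: sum_distrib_left[symmetric] eig' i)
    also have "\<dots> = D * lam i * w i v"
      unfolding w_def by (simp add: sum_distrib_left mult_ac)
    finally show ?thesis .
  qed
  define M where "M v v' = G v v' / D - (if v = v' then 1 else 0)" for v v'
  define \<phi> where "\<phi> i v = w i v / sqrt (D * lam i)" for i v
  have phiorth: "(\<Sum>v=0..<n. \<phi> i v * \<phi> j v) = (if i = j then 1 else 0)"
    if i: "i \<in> I" and j: "j \<in> I" for i j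
  proof -
    have "(\<Sum>v=0..<n. \<phi> i v * \<phi> j v) = (\<Sum>v=0..<n. w i v * w j v) / (sqrt (D * lam i) * sqrt (D * lam j))"
      unfolding \<phi>_def by (simp add: sum_divide_distrib)
    also have "\<dots> = (if i = j then 1 else 0)"
      using ww[OF i j] D lpos[OF i] by (auto simp: real_sqrt_mult_self)
    finally show ?thesis .
  qed
  have Mphi: "(\<Sum>v'=0..<n. M v v' * \<phi> i v') = (lam i - 1) * \<phi> i v" if i: "i \<in> I" and v: "v < n" for i v
  proof -
    have "(\<Sum>v'=0..<n. M v v' * \<phi> i v') = (\<Sum>v'=0..<n. G v v' * w i v') / D / sqrt (D * lam i)
          - (\<Sum>v'=0..<n. (if v = v' then \<phi> i v' else 0))"
    proof -
      have "(\<Sum>v'=0..<n. M v v' * \<phi> i v') = (\<Sum>v'=0..<n. G v v' * w i v' / D / sqrt (D * lam i)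
          - (if v = v' then \<phi> i v' else 0))"
        by (rule sum.cong, simp) (simp add: M_def \<phi>_def algebra_simps)
      then show ?thesis by (simp add: sum_subtractf sum_divide_distrib)
    qed
    also have "\<dots> = lam i * \<phi> i v - \<phi> i v"
      using Gw[OF i] D v unfolding \<phi>_def by simp
    finally show ?thesis by (simp add: algebra_simps)
  qed
  have "(\<Sum>i\<in>I. (lam i - 1)^2) = (\<Sum>i\<in>I. \<Sum>v=0..<n. ((lam i - 1) * \<phi> i v)^2)"
  proof (rule sum.cong, simp)
    fix i assume i: "i \<in> I"
    have "(\<Sum>v=0..<n. ((lam i - 1) * \<phi> i v)^2) = (lam i - 1)^2 * (\<Sum>v=0..<n. \<phi> i v * \<phi> i v)"
      by (simp add: sum_distrib_left power2_eq_square mult_ac)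
    then show "(lam i - 1)^2 = (\<Sum>v=0..<n. ((lam i - 1) * \<phi> i v)^2)" using phiorth[OF i i] by simp
  qed
  also have "\<dots> = (\<Sum>v=0..<n. \<Sum>i\<in>I. (\<Sum>v'=0..<n. M v v' * \<phi> i v')^2)"
    by (subst sum.swap) (rule sum.cong, simp, rule sum.cong, simp_all add: Mphi)
  also have "\<dots> \<le> (\<Sum>v=0..<n. \<Sum>v'=0..<n. (M v v')^2)"
    by (rule sum_mono, rule bessel[OF fI], simp_all add: phiorth)
  finally have A: "(\<Sum>i\<in>I. (lam i - 1)^2) \<le> (\<Sum>v=0..<n. \<Sum>v'=0..<n. (M v v')^2)" .
  define c where "c v v' = (\<Sum>u=0..<m. e v u * e v' u)" for v v'
  have esq: "e v u * e v u = e v u" if "v < n" "u < m" for v u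
    using be[OF that] by auto
  have bsq: "b v u * b v u = e v u" if "v < n" "u < m" for v u
  proof -
    have "b v u * b v u = \<bar>b v u\<bar> * \<bar>b v u\<bar>" by simp
    also have "\<dots> = e v u" using be[OF that] esq[OF that] by simp
    finally show ?thesis .
  qed
  have Gdiag: "G v v = D" if v: "v < n" for v
  proof -
    have "G v v = (\<Sum>u=0..<m. e v u)" unfolding G_def by (rule sum.cong) (auto simp: bsq v)
    then show ?thesis using degv[OF v] by simp
  qed
  have cdiag: "c v v = D" if v: "v < n" for v
  proof -
    have "c v v = (\<Sum>u=0..<m. e v u)" unfolding c_def by (rule sum.cong) (auto simp: esq v)
    then show ?thesis using degv[OF v] by simp
  qed
  have Gabs: "\<bar>G v v'\<bar> \<le> c v v'" if v: "v < n" and v': "v' < n" for v v'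
  proof -
    have "\<bar>G v v'\<bar> \<le> (\<Sum>u=0..<m. \<bar>b v u * b v' u\<bar>)" unfolding G_def by (rule sum_abs)
    also have "\<dots> = c v v'" unfolding c_def
      by (rule sum.cong, simp) (use be v v' in \<open>auto simp: abs_mult\<close>)
    finally show ?thesis .
  qed
  have Mbound: "(M v v')^2 \<le> (if v = v' then 0 else c v v' / D^2)" if v: "v < n" and v': "v' < n" for v v'
  proof (cases "v = v'")
    case True then show ?thesis using Gdiag[OF v] D by (simp add: M_def)
  next
    case False
    have c1: "c v v' \<le> 1" using c4[OF v v' False] unfolding c_def .
    have "(G v v')^2 = \<bar>G v v'\<bar> * \<bar>G v v'\<bar>" by (simp add: power2_eq_square)
    also have "\<dots> \<le> \<bar>G v v'\<bar> * 1"
      using Gabs[OF v v'] c1 by (intro mult_left_mono) auto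
    also have "\<dots> \<le> c v v'" using Gabs[OF v v'] by simp
    finally have "(G v v')^2 \<le> c v v'" .
    then show ?thesis using False D by (simp add: M_def power_divide divide_right_mono)
  qed
  have csum: "(\<Sum>v'=0..<n. c v v') = D * (real k + 1)" if v: "v < n" for v
  proof -
    have "(\<Sum>v'=0..<n. c v v') = (\<Sum>v'=0..<n. \<Sum>u=0..<m. e v u * e v' u)" unfolding c_def ..
    also have "\<dots> = (\<Sum>u=0..<m. \<Sum>v'=0..<n. e v u * e v' u)" by (rule sum.swap)
    also have "\<dots> = (\<Sum>u=0..<m. e v u * (real k + 1))"
      by (rule sum.cong, simp, simp add: sum_distrib_left[symmetric] degu)
    also have "\<dots> = D * (real k + 1)" using degv[OF v] by (simp add: sum_distrib_right[symmetric])
    finally show ?thesis .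
  qed
  have rowsum: "(\<Sum>v'=0..<n. (if v = v' then 0 else c v v' / D^2)) = D * real k / D^2" if v: "v < n" for v
  proof -
    have "(\<Sum>v'=0..<n. (if v = v' then 0 else c v v' / D^2)) = (\<Sum>v'=0..<n. c v v' / D^2 - (if v = v' then c v v' / D^2 else 0))"
      by (rule sum.cong) auto
    also have "\<dots> = (\<Sum>v'=0..<n. c v v') / D^2 - c v v / D^2"
      using v by (simp add: sum_subtractf sum_divide_distrib)
    also have "\<dots> = D * real k / D^2" using csum[OF v] cdiag[OF v] by (simp add: add_divide_distrib algebra_simps)
    finally show ?thesis .
  qed
  have nD: "real n * D = real m * (real k + 1)"
  proof -
    have "real n * D = (\<Sum>v=0..<n. \<Sum>u=0..<m. e v u)" using degv by simp
    also have "\<dots> = (\<Sum>u=0..<m. \<Sum>v=0..<n. e v u)" by (rule sum.swap)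
    also have "\<dots> = real m * (real k + 1)" using degu by simp
    finally show ?thesis .
  qed
  have "(\<Sum>v=0..<n. \<Sum>v'=0..<n. (M v v')^2) \<le> (\<Sum>v=0..<n. \<Sum>v'=0..<n. (if v = v' then 0 else c v v' / D^2))"
    by (intro sum_mono) (simp add: Mbound)
  also have "\<dots> = real n * (D * real k / D^2)" using rowsum by simp
  also have "\<dots> = (real n * D) * real k / D^2" by simp
  also have "\<dots> = real m * real k * (real k + 1) / D^2" unfolding nD by (simp add: mult_ac)
  finally show ?thesis using A by linarith
qed

lemma card_filter_sum: fixes m :: nat shows "real (card {u. u < m \<and> P u}) = (\<Sum>u=0..<m. if P u then 1 else 0)"
proof -
  have "{u. u < m \<and> P u} = {u\<in>{0..<m}. P u}" by auto
  then show ?thesis by (simp add: sum.inter_filter[symmetric])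
qed

theorem claim2p4:
  fixes n m d k :: nat and E :: "(nat \<times> nat) set" and B :: "real mat"
    and lam :: "nat \<Rightarrow> real" and psi :: "nat \<Rightarrow> real vec" and \<epsilon> \<delta> :: real
  assumes "k \<ge> 1" and "d > 0"
    and "C4free_bireg n m E d k"
    and "signed_adj n m E B"
    and "pos_eigen_system m d B (vec_space.rank n B) lam psi"
    and "\<epsilon> > 0" and "\<delta> > 0"
  shows "real (card (structured_set m (vec_space.rank n B) lam psi \<epsilon> \<delta>))
           \<le> real m * real k * (real k + 1) / ((real d)^2 * \<epsilon> * \<delta>)"
proof -
  define r where "r = vec_space.rank n B"
  define I where "I = {i. i < r \<and> (lam i - 1)^2 > \<epsilon>}"
  define e where "e v u = (if (v,u) \<in> E then 1 else 0 :: real)" for v u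
  define b where "b v u = B $$ (v,u)" for v u
  define p where "p i u = psi i $ u" for i u
  define K where "K = real m * real k * (real k + 1) / (real d)^2"
  note bi = assms(3)[unfolded C4free_bireg_def]
  note sa = assms(4)[unfolded signed_adj_def]
  note pe = assms(5)[unfolded pos_eigen_system_def, folded r_def]
  have Bc: "B \<in> carrier_mat n m" using sa by blast
  have fI: "finite I" unfolding I_def by simp
  have Ir: "\<And>i. i \<in> I \<Longrightarrow> i < r" unfolding I_def by simp
  have be: "\<bar>b v u\<bar> = e v u \<and> (e v u = 0 \<or> e v u = 1)" if "v < n" "u < m" for v u
    using sa that unfolding b_def e_def by (cases "(v,u) \<in> E") force+
  have degv: "(\<Sum>u=0..<m. e v u) = real d" if "v < n" for v
    using bi that card_filter_sum[of m "\<lambda>u. (v,u) \<in> E"] unfolding e_def by simp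
  have degu: "(\<Sum>v=0..<n. e v u) = real k + 1" if "u < m" for u
    using bi that card_filter_sum[of n "\<lambda>v. (v,u) \<in> E"] unfolding e_def by simp
  have c4: "(\<Sum>u=0..<m. e v u * e v' u) \<le> 1" if "v < n" "v' < n" "v \<noteq> v'" for v v'
  proof -
    have "(\<Sum>u=0..<m. e v u * e v' u) = real (card {u. u < m \<and> ((v,u) \<in> E \<and> (v',u) \<in> E)})"
      unfolding card_filter_sum e_def by (rule sum.cong) auto
    also have "\<dots> \<le> 1" using bi that by simp
    finally show ?thesis .
  qed
  have eig: "(\<Sum>u'=0..<m. (\<Sum>v=0..<n. b v u * b v u' / real d) * p i u') = lam i * p i u"
    if i: "i \<in> I" and u: "u < m" for i u
  proof -
    have ev: "Lminus d B *\<^sub>v psi i = lam i \<cdot>\<^sub>v psi i" and pc: "psi i \<in> carrier_vec m"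
      using pe Ir[OF i] by auto
    have "(Lminus d B *\<^sub>v psi i) $ u = (lam i \<cdot>\<^sub>v psi i) $ u" using ev by simp
    then show ?thesis using Bc pc u unfolding Lminus_def b_def p_def
      by (simp add: scalar_prod_def sum_distrib_left)
  qed
  have lpos: "\<And>i. i \<in> I \<Longrightarrow> lam i > 0" using pe Ir by blast
  have orth: "(\<Sum>u=0..<m. p i u * p j u) = (if i = j then 1 else 0)" if i: "i \<in> I" and j: "j \<in> I" for i j
  proof -
    have "psi i \<bullet> psi j = (if i = j then 1 else 0)" "psi j \<in> carrier_vec m"
      using pe Ir[OF i] Ir[OF j] by auto
    then show ?thesis unfolding p_def scalar_prod_def by simp
  qed
  have Kb: "(\<Sum>i\<in>I. (lam i - 1)^2) \<le> K"
    unfolding K_def using core[of "real d" I n m b e k p lam] assms(2) fI be degv degu c4 eig lpos orth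
    by simp
  have cI: "real (card I) * \<epsilon> \<le> K"
  proof -
    have "real (card I) * \<epsilon> = (\<Sum>i\<in>I. \<epsilon>)" by simp
    also have "\<dots> \<le> (\<Sum>i\<in>I. (lam i - 1)^2)" by (rule sum_mono) (auto simp: I_def)
    finally show ?thesis using Kb by linarith
  qed
  define S where "S = structured_set m r lam psi \<epsilon> \<delta>"
  have S_eq: "S = {u. u < m \<and> (\<Sum>i\<in>I. (p i u)^2) > \<delta>}"
    unfolding S_def structured_set_def I_def p_def ..
  have cS: "real (card S) * \<delta> \<le> real (card I)"
  proof -
    have fS: "S \<subseteq> {0..<m}" unfolding S_eq by auto
    have "real (card S) * \<delta> = (\<Sum>u\<in>S. \<delta>)" by simp
    also have "\<dots> \<le> (\<Sum>u\<in>S. \<Sum>i\<in>I. (p i u)^2)" by (rule sum_mono) (auto simp: S_eq)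
    also have "\<dots> \<le> (\<Sum>u\<in>{0..<m}. \<Sum>i\<in>I. (p i u)^2)"
      by (rule sum_mono2) (auto simp: fS sum_nonneg)
    also have "\<dots> = (\<Sum>i\<in>I. \<Sum>u\<in>{0..<m}. p i u * p i u)" by (subst sum.swap) (simp add: power2_eq_square)
    also have "\<dots> = real (card I)" by (simp add: orth)
    finally show ?thesis .
  qed
  have "real (card S) * (\<epsilon> * \<delta>) \<le> K"
  proof -
    have "real (card S) * (\<epsilon> * \<delta>) = (real (card S) * \<delta>) * \<epsilon>" by simp
    also have "\<dots> \<le> real (card I) * \<epsilon>" by (rule mult_right_mono[OF cS]) (use assms(6) in simp)
    finally show ?thesis using cI by linarith
  qed
  then have "real (card S) \<le> K / (\<epsilon> * \<delta>)" using assms(6,7) by (simp add: pos_le_divide_eq)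
  then show ?thesis unfolding S_def r_def K_def by (simp add: divide_divide_eq_left mult_ac)
qed

end
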